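(* Let $H\in\mathbb{R}^{n_z\times n_z}$ be symmetric positive definite, $F\in\mathbb{R}^{n_x\times n_z}$, $G\in\mathbb{R}^{n_c\times n_z}$, $S\in\mathbb{R}^{n_c\times n_x}$, $w\in\mathbb{R}^{n_c}$, and assume $\{z: Gz\le Sx+w\}\neq\emptyset$ for every $x\in\mathbb{R}^{n_x}$. Assume LICQ: for every $x$, the rows $\{G_j: j\in\mathbb{A}(x)\}$ are linearly independent. Let $\kappa$ be a global Lipschitz constant, $x,\hat{x}\in\mathbb{R}^{n_x}$, and $$\mathbb{I}(x)=\mathbb{A}(\hat{x})\cup\big\{j\in\mathbb{A}^c(\hat{x}): \mathcal{B}(z^*(\hat{x}),\kappa\|x-\hat{x}\|)\not\subseteq\mathcal{Z}_j(x)\big\}.$$ If $\|x-\hat{x}\|\le\sigma_i/\sqrt{1+\kappa^2}$ for some $i\in\{1,\dots,n_c\}$, then $|\mathbb{I}(x)|\le n_z+i$.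
   Context: mp-QP$(x)$: minimize $V(z)=\frac12z^THz+x^TFz$ over $\mathcal{Z}(x)=\{z: Gz\le Sx+w\}$. $G_j,S_j$ are $j$-th rows, $w_j$ the $j$-th entry, $\mathcal{Z}_j(x)=\{z: G_jz\le S_jx+w_j\}$. $z^*(x,\mathbb{I})$ is the unique minimizer of $V$ subject only to constraints indexed by $\mathbb{I}\subseteq\{1,\dots,n_c\}$; $z^*(x)=z^*(x,\{1,\dots,n_c\})$. $\mathbb{A}(x)=\{j: G_jz^*(x)=S_jx+w_j\}$, $\mathbb{A}^c(x)$ its complement in $\{1,\dots,n_c\}$. A global Lipschitz constant is $\kappa\in\mathbb{R}$ with $\|z^*(x_1,\mathbb{I})-z^*(x_2,\mathbb{I})\|\le\kappa\|x_1-x_2\|$ for all $x_1,x_2,\mathbb{I}$. With $\bar H=[-S,\;G]$, rows $\bar H_j$, $\mathcal{V}=\{v\in\mathbb{R}^{n_x+n_z}:\bar Hv\le w\}$, $\mathcal{V}_j=\{v:\bar H_jv\le w_j\}$, define $\sigma_i=\sup\{r\ge0: \inf_{v\in\mathcal{V}}|\{j: \mathcal{B}(v,r)\subseteq\mathcal{V}_j\}|\ge n_c-i\}\in[0,+\infty]$. $\mathcal{B}(q,r)$ is the closed Euclidean ball. *)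

theory Defs
  imports "HOL-Analysis.Analysis"
begin

text \<open>Dimensions are the cardinalities of the finite index types 'z, 'x, 'c.
  Row j of G is G $ j, so G_j z = (G $ j) \<bullet> z.\<close>

definition qp_cost ::
  "real^'z^'z \<Rightarrow> real^'z^'x \<Rightarrow> real^'x \<Rightarrow> real^'z \<Rightarrow> real" where
  "qp_cost H F x z = (1/2) * (z \<bullet> (H *v z)) + x \<bullet> (F *v z)"

definition Zj ::
  "real^'z^'c \<Rightarrow> real^'x^'c \<Rightarrow> real^'c \<Rightarrow> 'c \<Rightarrow> real^'x \<Rightarrow> (real^'z) set" where
  "Zj G S w j x = {z. (G $ j) \<bullet> z \<le> (S $ j) \<bullet> x + w $ j}"

definition zstar ::
  "real^'z^'z \<Rightarrow> real^'z^'x \<Rightarrow> real^'z^'c \<Rightarrow> real^'x^'c \<Rightarrow> real^'c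
   \<Rightarrow> real^'x \<Rightarrow> 'c set \<Rightarrow> real^'z" where
  "zstar H F G S w x I =
     (THE z. z \<in> (\<Inter>j\<in>I. Zj G S w j x) \<and>
             (\<forall>z'\<in>(\<Inter>j\<in>I. Zj G S w j x). qp_cost H F x z \<le> qp_cost H F x z'))"

definition active_set ::
  "real^'z^'z \<Rightarrow> real^'z^'x \<Rightarrow> real^'z^'c \<Rightarrow> real^'x^'c \<Rightarrow> real^'c
   \<Rightarrow> real^'x \<Rightarrow> 'c set" where
  "active_set H F G S w x =
     {j. (G $ j) \<bullet> zstar H F G S w x UNIV = (S $ j) \<bullet> x + w $ j}"

definition global_lipschitz ::
  "real^'z^'z \<Rightarrow> real^'z^'x \<Rightarrow> real^'z^'c \<Rightarrow> real^'x^'c \<Rightarrow> real^'c \<Rightarrow> real \<Rightarrow> bool" where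
  "global_lipschitz H F G S w \<kappa> \<longleftrightarrow>
     (\<forall>x1 x2 (I::'c set). norm (zstar H F G S w x1 I - zstar H F G S w x2 I) \<le> \<kappa> * norm (x1 - x2))"

text \<open>V_j = {v = (x,z) \<in> R^{n_x+n_z}. Hbar_j v \<le> w_j} with Hbar = [-S, G];
  the product type carries the Euclidean norm sqrt(|x|^2+|z|^2).\<close>
definition Vj ::
  "real^'z^'c \<Rightarrow> real^'x^'c \<Rightarrow> real^'c \<Rightarrow> 'c \<Rightarrow> ((real^'x) \<times> (real^'z)) set" where
  "Vj G S w j = {(x, z). - ((S $ j) \<bullet> x) + (G $ j) \<bullet> z \<le> w $ j}"

definition Vset ::
  "real^'z^'c \<Rightarrow> real^'x^'c \<Rightarrow> real^'c \<Rightarrow> ((real^'x) \<times> (real^'z)) set" where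
  "Vset G S w = (\<Inter>j. Vj G S w j)"

definition sigma ::
  "real^'z^'c \<Rightarrow> real^'x^'c \<Rightarrow> real^'c \<Rightarrow> nat \<Rightarrow> ereal" where
  "sigma G S w i =
     Sup {ereal r | r. r \<ge> 0 \<and>
       (INF v\<in>Vset G S w. ereal (real (card {j::'c. cball v r \<subseteq> Vj G S w j})))
         \<ge> ereal (real CARD('c) - real i)}"

end

theory Submission
  imports Defs
begin


lemma cball_sub_half:
  fixes h v :: "'a::real_inner"
  assumes "r \<ge> 0"
  shows "cball v r \<subseteq> {u. h \<bullet> u \<le> b} \<longleftrightarrow> h \<bullet> v + r * norm h \<le> b"
proof
  assume A: "cball v r \<subseteq> {u. h \<bullet> u \<le> b}"
  show "h \<bullet> v + r * norm h \<le> b"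
  proof (cases "h = 0")
    case True
    have "v \<in> cball v r" using assms by simp
    then have "h \<bullet> v \<le> b" using A by blast
    then show ?thesis using True by simp
  next
    case False
    let ?u = "v + (r / norm h) *\<^sub>R h"
    have "dist v ?u = r" using False assms by (simp add: dist_norm)
    then have "?u \<in> cball v r" by simp
    then have "h \<bullet> ?u \<le> b" using A by blast
    moreover have "h \<bullet> ?u = h \<bullet> v + r * norm h"
      using False by (simp add: inner_add_right power2_norm_eq_inner[symmetric] power2_eq_square)
    ultimately show ?thesis by simp
  qed
next
  assume B: "h \<bullet> v + r * norm h \<le> b"
  show "cball v r \<subseteq> {u. h \<bullet> u \<le> b}"
  proof
    fix u assume "u \<in> cball v r"
    then have d: "norm (u - v) \<le> r" by (simp add: dist_norm norm_minus_commute)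
    have "h \<bullet> (u - v) \<le> norm h * norm (u - v)" by (rule norm_cauchy_schwarz)
    also have "\<dots> \<le> norm h * r" using d by (simp add: mult_left_mono)
    finally have "h \<bullet> u \<le> h \<bullet> v + r * norm h" by (simp add: inner_diff_right algebra_simps)
    then show "u \<in> {u. h \<bullet> u \<le> b}" using B by simp
  qed
qed

lemma Vj_half: "Vj G S w j = {u. (- (S $ j), G $ j) \<bullet> u \<le> w $ j}"
  unfolding Vj_def by auto

lemma pd_coercive:
  fixes H :: "real^'z^'z"
  assumes pd: "\<forall>z. z \<noteq> 0 \<longrightarrow> z \<bullet> (H *v z) > 0"
  shows "\<exists>m>0. \<forall>z. m * (norm z)^2 \<le> z \<bullet> (H *v z)"
proof -
  have "continuous_on (sphere 0 1) (\<lambda>z::real^'z. z \<bullet> (H *v z))"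
    by (intro continuous_intros)
  moreover have "compact (sphere (0::real^'z) 1)" by simp
  moreover have "sphere (0::real^'z) 1 \<noteq> {}" by simp
  ultimately obtain u0 where u0: "u0 \<in> sphere 0 1" "\<forall>y\<in>sphere 0 1. u0 \<bullet> (H *v u0) \<le> y \<bullet> (H *v y)"
    using continuous_attains_inf by blast
  have "u0 \<noteq> 0" using u0(1) by auto
  then have mpos: "u0 \<bullet> (H *v u0) > 0" using pd by blast
  have "\<forall>z. (u0 \<bullet> (H *v u0)) * (norm z)^2 \<le> z \<bullet> (H *v z)"
  proof
    fix z :: "real^'z"
    show "(u0 \<bullet> (H *v u0)) * (norm z)^2 \<le> z \<bullet> (H *v z)"
    proof (cases "z = 0")
      case True then show ?thesis by simp
    next
      case False
      let ?u = "(1 / norm z) *\<^sub>R z"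
      have "?u \<in> sphere 0 1" using False by simp
      then have "u0 \<bullet> (H *v u0) \<le> ?u \<bullet> (H *v ?u)" using u0(2) by blast
      also have "?u \<bullet> (H *v ?u) = (z \<bullet> (H *v z)) / (norm z)^2"
        by (simp add: matrix_vector_mult_scaleR power2_eq_square)
      finally show ?thesis using False by (simp add: field_simps)
    qed
  qed
  then show ?thesis using mpos by blast
qed

lemma qp_mid:
  fixes H :: "real^'z^'z"
  shows "qp_cost H F x ((1/2) *\<^sub>R (a + b)) =
    (qp_cost H F x a + qp_cost H F x b) / 2 - (1/8) * ((a - b) \<bullet> (H *v (a - b)))"
  unfolding qp_cost_def
  by (simp add: matrix_vector_mult_scaleR matrix_vector_right_distrib matrix_vector_mult_diff_distrib
      inner_add_left inner_add_right inner_diff_left inner_diff_right algebra_simps)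

lemma aux_contra: "(qa::real) \<le> qb \<Longrightarrow> qb \<le> qa \<Longrightarrow> qa \<le> m \<Longrightarrow> m = (qa+qb)/2 - 1/8*p \<Longrightarrow> 0<p \<Longrightarrow> False"
  by (simp add: field_simps)

lemma qp_exists_unique:
  fixes H :: "real^'z^'z" and F :: "real^'z^'x" and x :: "real^'x" and K :: "(real^'z) set"
  assumes pd: "\<forall>z. z \<noteq> 0 \<longrightarrow> z \<bullet> (H *v z) > 0"
    and K: "closed K" "convex K" "K \<noteq> {}"
  shows "\<exists>!z. z \<in> K \<and> (\<forall>z'\<in>K. qp_cost H F x z \<le> qp_cost H F x z')"
proof -
  obtain m where m: "m > 0" "\<forall>z. m * (norm z)^2 \<le> z \<bullet> (H *v z)"
    using pd_coercive[OF pd] by blast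
  define c where "c = x v* F"
  have qc: "qp_cost H F x z = (1/2) * (z \<bullet> (H *v z)) + c \<bullet> z" for z
    unfolding qp_cost_def c_def by (simp add: dot_lmul_matrix)
  have qlow: "(1/2) * m * (norm z)^2 - norm c * norm z \<le> qp_cost H F x z" for z
  proof -
    have "- (norm c * norm z) \<le> c \<bullet> z"
      using norm_cauchy_schwarz[of "-c" z] by simp
    then show ?thesis using m(2)[rule_format, of z] unfolding qc by linarith
  qed
  obtain z0 where z0: "z0 \<in> K" using K(3) by blast
  define q0 where "q0 = qp_cost H F x z0"
  define R where "R = max 1 (2 * (abs q0 + norm c) / m)"
  have bnd: "norm z \<le> R" if "qp_cost H F x z \<le> q0" for z
  proof (rule ccontr)
    assume "\<not> norm z \<le> R"
    then have t1: "norm z > 1" and t2: "norm z > 2 * (abs q0 + norm c) / m"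
      unfolding R_def by auto
    have a: "(1/2) * m * (norm z)^2 - norm c * norm z \<le> abs q0"
      using qlow[of z] that by linarith
    have b: "abs q0 * 1 \<le> abs q0 * norm z"
      using t1 by (intro mult_left_mono) auto
    have "((1/2) * m * norm z) * norm z \<le> (abs q0 + norm c) * norm z"
      using a b by (simp add: power2_eq_square algebra_simps)
    then have "(1/2) * m * norm z \<le> abs q0 + norm c"
      using t1 mult_right_le_imp_le[of "(1/2) * m * norm z" "norm z" "abs q0 + norm c"] by fastforce
    then have "norm z \<le> 2 * (abs q0 + norm c) / m"
      using m(1) by (simp add: pos_le_divide_eq field_simps)
    then show False using t2 by simp
  qed
  define L where "L = K \<inter> cball 0 R"
  have "compact L" unfolding L_def using K(1) by (simp add: closed_Int_compact)
  moreover have "z0 \<in> L" unfolding L_def using z0 bnd[of z0] by (simp add: q0_def)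
  moreover have "continuous_on L (qp_cost H F x)"
    unfolding qp_cost_def by (intro continuous_intros)
  ultimately obtain zm where zm: "zm \<in> L" "\<forall>y\<in>L. qp_cost H F x zm \<le> qp_cost H F x y"
    using continuous_attains_inf[of L "qp_cost H F x"] by blast
  have zmin: "zm \<in> K \<and> (\<forall>z'\<in>K. qp_cost H F x zm \<le> qp_cost H F x z')"
  proof (intro conjI ballI)
    show "zm \<in> K" using zm(1) L_def by simp
  next
    fix z' assume z': "z' \<in> K"
    have "qp_cost H F x zm \<le> q0" using zm(2) \<open>z0 \<in> L\<close> q0_def by simp
    show "qp_cost H F x zm \<le> qp_cost H F x z'"
    proof (cases "norm z' \<le> R")
      case True
      then have "z' \<in> L" using z' L_def by simp
      then show ?thesis using zm(2) by blast
    next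
      case False
      then have "\<not> qp_cost H F x z' \<le> q0" using bnd by blast
      then show ?thesis using \<open>qp_cost H F x zm \<le> q0\<close> by simp
    qed
  qed
  show ?thesis
  proof (rule ex_ex1I)
    show "\<exists>z. z \<in> K \<and> (\<forall>z'\<in>K. qp_cost H F x z \<le> qp_cost H F x z')" using zmin by blast
  next
    fix a b
    assume A: "a \<in> K \<and> (\<forall>z'\<in>K. qp_cost H F x a \<le> qp_cost H F x z')"
      and B: "b \<in> K \<and> (\<forall>z'\<in>K. qp_cost H F x b \<le> qp_cost H F x z')"
    show "a = b"
    proof (rule ccontr)
      assume "a \<noteq> b"
      then have "a - b \<noteq> 0" by simp
      then have pos: "(a - b) \<bullet> (H *v (a - b)) > 0" using pd by blast
      have "(1/2) *\<^sub>R (a + b) = (1/2) *\<^sub>R a + (1 - 1/2) *\<^sub>R b" by (simp add: scaleR_add_right)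
      then have mK: "(1/2) *\<^sub>R (a + b) \<in> K"
        using K(2) A B by (simp add: convex_def)
      have "qp_cost H F x a \<le> qp_cost H F x b" "qp_cost H F x b \<le> qp_cost H F x a"
        using A B by auto
      moreover have "qp_cost H F x a \<le> qp_cost H F x ((1/2) *\<^sub>R (a + b))" using A mK by blast
      moreover have "qp_cost H F x ((1/2) *\<^sub>R (a + b)) =
        (qp_cost H F x a + qp_cost H F x b) / 2 - (1/8) * ((a - b) \<bullet> (H *v (a - b)))"
        by (rule qp_mid)
      ultimately show False using pos by (rule aux_contra)
    qed
  qed
qed

theorem theorem3:
  fixes H :: "real^'z^'z" and F :: "real^'z^'x" and G :: "real^'z^'c"
    and S :: "real^'x^'c" and w :: "real^'c" and \<kappa> :: real
    and x xhat :: "real^'x" and i :: nat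
  assumes H_sym: "transpose H = H"
    and H_pd: "\<forall>z. z \<noteq> 0 \<longrightarrow> z \<bullet> (H *v z) > 0"
    and feasible: "\<forall>x. (\<Inter>j. Zj G S w j x) \<noteq> {}"
    and LICQ: "\<forall>x. inj_on (\<lambda>j. G $ j) (active_set H F G S w x) \<and>
                   independent ((\<lambda>j. G $ j) ` active_set H F G S w x)"
    and lip: "global_lipschitz H F G S w \<kappa>"
    and i_range: "i \<in> {1..CARD('c)}"
    and close: "ereal (norm (x - xhat)) \<le> sigma G S w i / ereal (sqrt (1 + \<kappa>\<^sup>2))"
  shows "card (active_set H F G S w xhat \<union>
           {j. j \<notin> active_set H F G S w xhat \<and>
               \<not> cball (zstar H F G S w xhat UNIV) (\<kappa> * norm (x - xhat)) \<subseteq> Zj G S w j x})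
         \<le> CARD('z) + i"
proof -
  define A where "A = active_set H F G S w xhat"
  define zh where "zh = zstar H F G S w xhat UNIV"
  define K where "K = (\<Inter>j. Zj G S w j xhat)"
  define bad where "bad = {j. j \<notin> A \<and> \<not> cball zh (\<kappa> * norm (x - xhat)) \<subseteq> Zj G S w j x}"
  have Zj_eq: "Zj G S w j y = {z. (G $ j) \<bullet> z \<le> (S $ j) \<bullet> y + w $ j}" for j y
    by (simp add: Zj_def)
  have clK: "closed K" unfolding K_def Zj_eq by (intro closed_INT ballI closed_halfspace_le)
  have cvK: "convex K" unfolding K_def Zj_eq by (intro convex_INT ballI convex_halfspace_le)
  have neK: "K \<noteq> {}" unfolding K_def using feasible by blast
  have "zh \<in> K \<and> (\<forall>z'\<in>K. qp_cost H F xhat zh \<le> qp_cost H F xhat z')"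
    unfolding zh_def zstar_def K_def
    using theI'[OF qp_exists_unique[OF H_pd clK cvK neK, of F xhat]] unfolding K_def .
  then have zhK: "zh \<in> K" by blast
  define vh where "vh = (xhat, zh)"
  have vhV: "vh \<in> Vj G S w j" for j
  proof -
    have "(G $ j) \<bullet> zh \<le> (S $ j) \<bullet> xhat + w $ j"
      using zhK unfolding K_def Zj_def by auto
    then show ?thesis unfolding vh_def Vj_def by auto
  qed
  have vhVset: "vh \<in> Vset G S w" using vhV unfolding Vset_def by blast
  define Good where "Good r = {j. cball vh r \<subseteq> Vj G S w j}" for r
  define d where "d = norm (x - xhat)"
  define c where "c = sqrt (1 + \<kappa>\<^sup>2)"
  define \<rho> where "\<rho> = c * d"
  have c1: "c \<ge> 1" unfolding c_def by simp
  have d0: "d \<ge> 0" unfolding d_def by simp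
  have rho0: "\<rho> \<ge> 0" unfolding \<rho>_def using c1 d0 by simp
  have bad_sub: "bad \<subseteq> - Good \<rho>"
  proof
    fix j assume "j \<in> bad"
    then obtain z where z: "z \<in> cball zh (\<kappa> * d)" "z \<notin> Zj G S w j x"
      unfolding bad_def d_def by blast
    have dz: "dist zh z \<le> \<kappa> * d" using z(1) by simp
    have "(dist zh z)^2 \<le> (\<kappa> * d)^2"
      using dz zero_le_dist[of zh z] by (intro power_mono) auto
    then have "(dist xhat x)^2 + (dist zh z)^2 \<le> (c * d)^2"
      unfolding c_def using d0 by (simp add: d_def dist_norm norm_minus_commute power_mult_distrib algebra_simps)
    then have "sqrt ((dist xhat x)^2 + (dist zh z)^2) \<le> sqrt ((c * d)^2)"
      by (rule real_sqrt_le_mono)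
    also have "\<dots> = c * d" using c1 d0 by simp
    finally have "sqrt ((dist xhat x)^2 + (dist zh z)^2) \<le> c * d" .
    then have "(x, z) \<in> cball vh \<rho>" unfolding vh_def \<rho>_def by (simp add: dist_Pair_Pair)
    moreover have "(x, z) \<notin> Vj G S w j" using z(2) unfolding Vj_def Zj_def by auto
    ultimately show "j \<in> - Good \<rho>" unfolding Good_def by blast
  qed
  have Good_mono: "Good r2 \<subseteq> Good r1" if "r1 \<le> r2" for r1 r2
    unfolding Good_def using that by (auto intro: subset_cball[THEN order_trans])
  have Good0: "Good 0 = UNIV" unfolding Good_def using vhV by auto
  define \<sigma> where "\<sigma> = sigma G S w i"
  have approx: "real CARD('c) - real i \<le> real (card (Good r))" if r: "0 \<le> r" "ereal r < \<sigma>" for r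
  proof -
    obtain y where y: "y \<in> {ereal r | r. r \<ge> 0 \<and>
       (INF v\<in>Vset G S w. ereal (real (card {j::'c. cball v r \<subseteq> Vj G S w j})))
         \<ge> ereal (real CARD('c) - real i)}" "ereal r < y"
      using r(2) unfolding \<sigma>_def sigma_def less_Sup_iff by blast
    then obtain r2 where r2: "y = ereal r2" "r2 \<ge> 0"
      "(INF v\<in>Vset G S w. ereal (real (card {j::'c. cball v r2 \<subseteq> Vj G S w j})))
         \<ge> ereal (real CARD('c) - real i)" by blast
    have "(INF v\<in>Vset G S w. ereal (real (card {j::'c. cball v r2 \<subseteq> Vj G S w j})))
        \<le> ereal (real (card (Good r2)))"
      unfolding Good_def by (rule INF_lower) (rule vhVset)
    with r2(3) have "ereal (real CARD('c) - real i) \<le> ereal (real (card (Good r2)))"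
      by (rule order_trans)
    then have "real CARD('c) - real i \<le> real (card (Good r2))" by simp
    moreover have "card (Good r2) \<le> card (Good r)"
      using Good_mono[of r r2] r2(1) y(2) by (intro card_mono) auto
    ultimately show ?thesis by linarith
  qed
  have cpos: "ereal c > 0" using c1 by simp
  have "ereal d \<le> \<sigma> / ereal c" using close unfolding \<sigma>_def d_def c_def .
  then have "ereal c * ereal d \<le> \<sigma>" using ereal_le_divide_pos[OF cpos] by simp
  then have rho_le: "ereal \<rho> \<le> \<sigma>" unfolding \<rho>_def by simp
  have goodrho: "real CARD('c) - real i \<le> real (card (Good \<rho>))"
  proof (cases "\<rho> = 0")
    case True
    then show ?thesis using Good0 by simp
  next
    case False
    then have rpos: "\<rho> > 0" using rho0 by simp
    define h where "h j = (- (S $ j), G $ j)" for j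
    have Gchar: "Good r = {j. h j \<bullet> vh + r * norm (h j) \<le> w $ j}" if "r \<ge> 0" for r
      unfolding Good_def Vj_half h_def using cball_sub_half[OF that] by auto
    have ev1: "eventually (\<lambda>r. h j \<bullet> vh + r * norm (h j) > w $ j) (at_left \<rho>)"
      if "j \<in> - Good \<rho>" for j
    proof -
      have "h j \<bullet> vh + \<rho> * norm (h j) > w $ j" using that Gchar[OF rho0] by auto
      moreover have "((\<lambda>r. h j \<bullet> vh + r * norm (h j)) \<longlongrightarrow> h j \<bullet> vh + \<rho> * norm (h j)) (at_left \<rho>)"
        by (intro tendsto_intros)
      ultimately show ?thesis by (rule order_tendstoD(1)[rotated])
    qed
    have "eventually (\<lambda>r. \<forall>j\<in>- Good \<rho>. h j \<bullet> vh + r * norm (h j) > w $ j) (at_left \<rho>)"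
      using ev1 by (intro eventually_ball_finite) auto
    moreover have "eventually (\<lambda>r. r \<in> {0<..<\<rho>}) (at_left \<rho>)"
      using rpos by (rule eventually_at_left_real)
    ultimately have "eventually (\<lambda>r. r \<in> {0<..<\<rho>} \<and> (\<forall>j\<in>- Good \<rho>. h j \<bullet> vh + r * norm (h j) > w $ j)) (at_left \<rho>)"
      by (rule eventually_conj[rotated])
    then obtain r where r: "r \<in> {0<..<\<rho>}" "\<forall>j\<in>- Good \<rho>. h j \<bullet> vh + r * norm (h j) > w $ j"
      using eventually_happens[of _ "at_left \<rho>"] by auto
    have "Good r \<subseteq> Good \<rho>"
    proof
      fix j assume "j \<in> Good r"
      then have "h j \<bullet> vh + r * norm (h j) \<le> w $ j" using Gchar[of r] r(1) by auto
      then show "j \<in> Good \<rho>" using r(2) by force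
    qed
    then have "card (Good r) \<le> card (Good \<rho>)" by (intro card_mono) auto
    moreover have "ereal r < ereal \<rho>" using r(1) by simp
    then have "ereal r < \<sigma>" using rho_le by (rule less_le_trans)
    ultimately show ?thesis using approx[of r] r(1) by simp
  qed
  have cardA: "card A \<le> CARD('z)"
  proof -
    have "inj_on (\<lambda>j. G $ j) A" "independent ((\<lambda>j. G $ j) ` A)"
      using LICQ unfolding A_def by auto
    then have "card ((\<lambda>j. G $ j) ` A) \<le> DIM(real^'z)" "card ((\<lambda>j. G $ j) ` A) = card A"
      using independent_bound card_image by blast+
    then show ?thesis by simp
  qed
  have "card (- Good \<rho>) = CARD('c) - card (Good \<rho>)"
    by (simp add: Compl_eq_Diff_UNIV card_Diff_subset)
  then have "card (- Good \<rho>) \<le> i" using goodrho by linarith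
  then have cardbad: "card bad \<le> i"
    using bad_sub card_mono[of "- Good \<rho>" bad] by simp
  have "card (A \<union> bad) \<le> card A + card bad" by (rule card_Un_le)
  also have "\<dots> \<le> CARD('z) + i" using cardA cardbad by simp
  finally have "card (A \<union> bad) \<le> CARD('z) + i" .
  then show ?thesis unfolding A_def bad_def zh_def d_def by simp
qed

end
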